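(* Let $f:\mathbb{R}^n\to(-\infty,+\infty]$ be a proper closed function, let $\mathcal{M}$ be a $C^1$-smooth embedded submanifold of $\mathbb{R}^n$ containing $\bar x$ with the induced metric, and suppose $f$ is $C^1$-partly smooth and prox-regular around $\bar x$ relative to $\mathcal{M}$, with $g_{\mathcal{U}}(\bar x)\in\operatorname{ri}\partial f(\bar x)$. Then for all $x\in\mathcal{M}$ near $\bar x$, $\nabla_{\mathcal{M}}f(x)=g_{\mathcal{U}}(x)$.
   Context: $\hat\partial f$ is the Fréchet and $\partial f$ the limiting subdifferential. Partial smoothness: $f$ is partly smooth at a point $x\in\mathcal M$ relative to a $C^p$ manifold $\mathcal{M}$ (for all subgradients) if: (Regularity) $\hat\partial f(z)=\partial f(z)\neq\varnothing$ for all $z\in\mathcal{M}$ near $x$; (Restricted smoothness) $f|_{\mathcal{M}}$ is $C^p$-smooth around $x$; (Sharpness) $\operatorname{par}\partial f(x)$ equals $N_x\mathcal{M}$; (Inner semicontinuity) for every $y\in\partial f(x)$ and every sequence $x_r\to x$ in $\mathcal{M}$ there exist $y_r\in\partial f(x_r)$ with $y_r\to y$. "Around $\bar x$ relative to $\mathcal M$" means at every point of $\mathcal M$ near $\bar x$ (with $p=1$). $f$ is prox-regular at $x$ for $\bar v\in\hat\partial f(x)$ if there are $\epsilon>0,\rho\ge0$ with $f(x'')\ge f(x')+\langle v,x''-x'\rangle-\frac\rho2\|x''-x'\|^2$ for all $x',x''\in B_\epsilon(x)$ and $v\in\hat\partial f(x')$ with $\|v-\bar v\|<\epsilon$, $f(x')<f(x)+\epsilon$;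 "prox-regular around $\bar x$ relative to $\mathcal M$" is taken to mean prox-regular at every point of $\mathcal M$ near $\bar x$ for each of its subgradients. For $g\in\partial f(x)$: $\mathcal{V}(x)=\operatorname{lin}(\partial f(x)-g)$, $\mathcal{U}(x)=\mathcal{V}(x)^\perp$, $g_{\mathcal U}(x)=P_{\mathcal U(x)}(g)$ (independent of $g$). $\nabla_{\mathcal M}f(x)$ is the Riemannian gradient of $f|_{\mathcal M}$. *)

theory Defs
  imports "HOL-Analysis.Analysis" "HOL-Library.Extended_Real"
begin

definition proper_fun :: "('a::euclidean_space \<Rightarrow> ereal) \<Rightarrow> bool" where
  "proper_fun f \<longleftrightarrow> (\<forall>x. f x \<noteq> -\<infinity>) \<and> (\<exists>x. f x \<noteq> \<infinity>)"

text \<open>Closed = lower semicontinuous = closed epigraph.\<close>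
definition closed_fun :: "('a::euclidean_space \<Rightarrow> ereal) \<Rightarrow> bool" where
  "closed_fun f \<longleftrightarrow> closed {(x, t::real). f x \<le> ereal t}"

definition frechet_subdiff :: "('a::euclidean_space \<Rightarrow> ereal) \<Rightarrow> 'a \<Rightarrow> 'a set" where
  "frechet_subdiff f x = {v. \<bar>f x\<bar> \<noteq> \<infinity> \<and>
     (\<forall>e>0. \<exists>d>0. \<forall>y. dist y x < d \<longrightarrow>
        f y \<ge> f x + ereal (v \<bullet> (y - x) - e * norm (y - x)))}"

definition limiting_subdiff :: "('a::euclidean_space \<Rightarrow> ereal) \<Rightarrow> 'a \<Rightarrow> 'a set" where
  "limiting_subdiff f x = {v. \<bar>f x\<bar> \<noteq> \<infinity> \<and>
     (\<exists>xs vs. xs \<longlonglongrightarrow> x \<and> (\<lambda>k. f (xs k)) \<longlonglongrightarrow> f x \<and>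
        (\<forall>k. vs k \<in> frechet_subdiff f (xs k)) \<and> vs \<longlonglongrightarrow> v)}"

text \<open>C^1 embedded submanifold of R^n: locally the zero set of finitely many
  C^1 functions F_0,...,F_{m-1} (i.e. of a C^1 map U -> R^m) whose Jacobian
  is surjective at the points of M in U.\<close>
definition C1_submanifold :: "'a::euclidean_space set \<Rightarrow> bool" where
  "C1_submanifold M \<longleftrightarrow> (\<forall>x\<in>M. \<exists>U m (F :: nat \<Rightarrow> 'a \<Rightarrow> real) (G :: nat \<Rightarrow> 'a \<Rightarrow> 'a).
      open U \<and> x \<in> U \<and>
      (\<forall>i<m. \<forall>y\<in>U. (F i has_derivative (\<lambda>h. G i y \<bullet> h)) (at y)) \<and>
      (\<forall>i<m. continuous_on U (G i)) \<and>
      M \<inter> U = {y\<in>U. \<forall>i<m. F i y = 0} \<and>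
      (\<forall>y\<in>M \<inter> U. \<forall>c :: nat \<Rightarrow> real. \<exists>h. \<forall>i<m. G i y \<bullet> h = c i))"

definition tangent_space :: "'a::euclidean_space set \<Rightarrow> 'a \<Rightarrow> 'a set" where
  "tangent_space M x = {w. \<exists>\<gamma> e. e > 0 \<and> \<gamma> 0 = x \<and> (\<forall>t. \<bar>t\<bar> < e \<longrightarrow> \<gamma> t \<in> M) \<and>
        (\<gamma> has_vector_derivative w) (at 0)}"

definition normal_space :: "'a::euclidean_space set \<Rightarrow> 'a \<Rightarrow> 'a set" where
  "normal_space M x = orthogonal_comp (tangent_space M x)"

definition is_riem_grad :: "'a::euclidean_space set \<Rightarrow> ('a \<Rightarrow> ereal) \<Rightarrow> 'a \<Rightarrow> 'a \<Rightarrow> bool" where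
  "is_riem_grad M f x v \<longleftrightarrow> v \<in> tangent_space M x \<and>
     (\<forall>\<gamma> e w. e > 0 \<longrightarrow> \<gamma> 0 = x \<longrightarrow> (\<forall>t. \<bar>t\<bar> < e \<longrightarrow> \<gamma> t \<in> M) \<longrightarrow>
        (\<gamma> has_vector_derivative w) (at 0) \<longrightarrow>
        ((\<lambda>t. real_of_ereal (f (\<gamma> t))) has_real_derivative (v \<bullet> w)) (at 0))"

definition riem_grad :: "'a::euclidean_space set \<Rightarrow> ('a \<Rightarrow> ereal) \<Rightarrow> 'a \<Rightarrow> 'a" where
  "riem_grad M f x = (THE v. is_riem_grad M f x v)"

text \<open>par S: the linear subspace parallel to the affine hull of S.\<close>
definition par :: "'a::euclidean_space set \<Rightarrow> 'a set" where
  "par S = span {a - b | a b. a \<in> S \<and> b \<in> S}"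

definition proj :: "'a::euclidean_space set \<Rightarrow> 'a \<Rightarrow> 'a" where
  "proj W v = (THE u. u \<in> W \<and> v - u \<in> orthogonal_comp W)"

definition Vsp :: "('a::euclidean_space \<Rightarrow> ereal) \<Rightarrow> 'a \<Rightarrow> 'a set" where
  "Vsp f x = span {y - (SOME g. g \<in> limiting_subdiff f x) | y. y \<in> limiting_subdiff f x}"

definition Usp :: "('a::euclidean_space \<Rightarrow> ereal) \<Rightarrow> 'a \<Rightarrow> 'a set" where
  "Usp f x = orthogonal_comp (Vsp f x)"

definition gU :: "('a::euclidean_space \<Rightarrow> ereal) \<Rightarrow> 'a \<Rightarrow> 'a" where
  "gU f x = proj (Usp f x) (SOME g. g \<in> limiting_subdiff f x)"

definition partly_smooth_at :: "('a::euclidean_space \<Rightarrow> ereal) \<Rightarrow> 'a \<Rightarrow> 'a set \<Rightarrow> bool" where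
  "partly_smooth_at f x M \<longleftrightarrow> x \<in> M \<and> C1_submanifold M \<and>
     \<comment> \<open>regularity\<close>
     (\<exists>d>0. \<forall>z\<in>M. dist z x < d \<longrightarrow>
        frechet_subdiff f z = limiting_subdiff f z \<and> limiting_subdiff f z \<noteq> {}) \<and>
     \<comment> \<open>restricted smoothness: f on M agrees near x with a C^1 function\<close>
     (\<exists>U h Dh. open U \<and> x \<in> U \<and>
        (\<forall>y\<in>U. (h has_derivative (\<lambda>v. Dh y \<bullet> v)) (at y)) \<and> continuous_on U Dh \<and>
        (\<forall>z\<in>M \<inter> U. f z = ereal (h z))) \<and>
     \<comment> \<open>sharpness\<close>
     par (limiting_subdiff f x) = normal_space M x \<and>
     \<comment> \<open>inner semicontinuity\<close>
     (\<forall>y\<in>limiting_subdiff f x. \<forall>xs. (\<forall>r. xs r \<in> M) \<longrightarrow> xs \<longlonglongrightarrow> x \<longrightarrow>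
        (\<exists>ys. (\<forall>\<^sub>F r in sequentially. ys r \<in> limiting_subdiff f (xs r)) \<and> ys \<longlonglongrightarrow> y))"

definition prox_regular_at :: "('a::euclidean_space \<Rightarrow> ereal) \<Rightarrow> 'a \<Rightarrow> 'a \<Rightarrow> bool" where
  "prox_regular_at f x vb \<longleftrightarrow> (\<exists>e>0. \<exists>\<rho>\<ge>0. \<forall>x' x'' v.
      x' \<in> ball x e \<longrightarrow> x'' \<in> ball x e \<longrightarrow> v \<in> frechet_subdiff f x' \<longrightarrow>
      norm (v - vb) < e \<longrightarrow> f x' < f x + ereal e \<longrightarrow>
      f x'' \<ge> f x' + ereal (v \<bullet> (x'' - x') - \<rho> / 2 * (norm (x'' - x'))\<^sup>2))"

end

theory Submission
  imports Defs
begin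

lemma tangent_sub:
  fixes M U :: "'a::euclidean_space set"
  assumes "open U" "x \<in> U"
    and der: "\<forall>i<m. \<forall>y\<in>U. (F i has_derivative (\<lambda>h. G i y \<bullet> h)) (at y)"
    and MU: "M \<inter> U = {y\<in>U. \<forall>i<m. F i y = 0}"
    and w: "w \<in> tangent_space M x"
  shows "\<forall>i<m. G i x \<bullet> w = 0"
proof (intro allI impI)
  fix i assume i: "i < m"
  from w obtain \<gamma> e where e: "e > 0" "\<gamma> 0 = x" "\<forall>t. \<bar>t\<bar> < e \<longrightarrow> \<gamma> t \<in> M"
     and gd: "(\<gamma> has_vector_derivative w) (at 0)"
    unfolding tangent_space_def by blast
  have "isCont \<gamma> 0"
    using gd by (metis differentiableI_vector differentiable_imp_continuous_within)
  then have ev1: "\<forall>\<^sub>F t in nhds 0. \<gamma> t \<in> U"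
    using assms(1,2) e(2) unfolding isCont_def tendsto_at_iff_tendsto_nhds
    by (metis topological_tendstoD)
  have ev2: "\<forall>\<^sub>F t in nhds 0. \<bar>t\<bar> < (e::real)"
    using eventually_nhds_in_open[of "{-e<..<e}" 0] e(1) by (auto elim!: eventually_mono simp: abs_less_iff)
  have ev: "\<forall>\<^sub>F t in nhds 0. F i (\<gamma> t) = 0"
    using ev1 ev2 apply eventually_elim using MU e(3) i by blast
  have dF: "(F i has_derivative (\<lambda>h. G i x \<bullet> h)) (at (\<gamma> 0))"
    using der i assms(2) e(2) by auto
  have "((\<lambda>t. F i (\<gamma> t)) has_derivative (\<lambda>s. G i x \<bullet> (s *\<^sub>R w))) (at 0)"
    using has_derivative_compose[OF gd[unfolded has_vector_derivative_def] dF] .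
  then have "DERIV (\<lambda>t. F i (\<gamma> t)) 0 :> G i x \<bullet> w"
    unfolding has_field_derivative_def by (simp add: mult.commute[of _ "G i x \<bullet> w"])
  then have "DERIV (\<lambda>t. 0) 0 :> G i x \<bullet> w"
    using DERIV_cong_ev[OF refl ev refl] by simp
  then show "G i x \<bullet> w = 0"
    using DERIV_const DERIV_unique by blast
qed

lemma tangent_sup:
  fixes M U :: "'a::euclidean_space set"
  assumes "open U" "x \<in> U" "x \<in> M"
    and der: "\<forall>i<m. \<forall>y\<in>U. (F i has_derivative (\<lambda>h. G i y \<bullet> h)) (at y)"
    and cont: "\<forall>i<m. continuous_on U (G i)"
    and MU: "M \<inter> U = {y\<in>U. \<forall>i<m. F i y = 0}"
    and surj: "\<forall>c::nat\<Rightarrow>real. \<exists>h. \<forall>i<m. G i x \<bullet> h = c i"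
    and w: "\<forall>i<m. G i x \<bullet> w = 0"
  shows "w \<in> tangent_space M x"
proof -
  define u where "u i = (SOME h. \<forall>j<m. G j x \<bullet> h = (if j = i then 1 else 0))" for i
  have u: "\<forall>j<m. G j x \<bullet> u i = (if j = i then 1 else 0)" for i
  proof -
    from surj have "\<exists>h. \<forall>j<m. G j x \<bullet> h = (if j = i then 1 else 0)"
      by (rule allE[where x="\<lambda>j. if j = i then 1 else 0"]) simp
    then show ?thesis unfolding u_def by (rule someI_ex)
  qed
  define \<Phi> where "\<Phi> y = (y - x) + (\<Sum>i<m. (F i y - G i x \<bullet> (y - x)) *\<^sub>R u i)" for y
  define \<Phi>' where "\<Phi>' y = id_blinfun + (\<Sum>i<m. blinfun_scaleR_left (u i) o\<^sub>L blinfun_inner_left (G i y - G i x))" for y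
  have \<Phi>'_app: "blinfun_apply (\<Phi>' y) h = h + (\<Sum>i<m. (G i y \<bullet> h - G i x \<bullet> h) *\<^sub>R u i)" for y h
    by (simp add: \<Phi>'_def blinfun.add_left blinfun.sum_left inner_diff_right inner_commute)
  have d\<Phi>: "(\<Phi> has_derivative blinfun_apply (\<Phi>' y)) (at y)" if y: "y \<in> U" for y
  proof -
    have "((\<lambda>y. (F i y - G i x \<bullet> (y - x)) *\<^sub>R u i) has_derivative (\<lambda>h. (G i y \<bullet> h - G i x \<bullet> h) *\<^sub>R u i)) (at y)"
      if i: "i < m" for i
      using der i y by (auto intro!: derivative_eq_intros)
    then have "((\<lambda>y. \<Sum>i<m. (F i y - G i x \<bullet> (y - x)) *\<^sub>R u i) has_derivative (\<lambda>h. \<Sum>i<m. (G i y \<bullet> h - G i x \<bullet> h) *\<^sub>R u i)) (at y)"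
      by (intro has_derivative_sum) auto
    then have "((\<lambda>y. (y - x) + (\<Sum>i<m. (F i y - G i x \<bullet> (y - x)) *\<^sub>R u i)) has_derivative (\<lambda>h. (h - 0) + (\<Sum>i<m. (G i y \<bullet> h - G i x \<bullet> h) *\<^sub>R u i))) (at y)"
      by (rule has_derivative_add[OF has_derivative_diff[OF has_derivative_ident has_derivative_const]])
    moreover have "blinfun_apply (\<Phi>' y) = (\<lambda>h. (h - 0) + (\<Sum>i<m. (G i y \<bullet> h - G i x \<bullet> h) *\<^sub>R u i))"
      by (rule ext) (simp add: \<Phi>'_app)
    ultimately show ?thesis unfolding \<Phi>_def by simp
  qed
  have c\<Phi>': "continuous_on U \<Phi>'"
    unfolding \<Phi>'_def using cont by (auto intro!: continuous_intros)
  have \<Phi>'x: "\<Phi>' x = id_blinfun"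
    by (rule blinfun_eqI) (simp add: \<Phi>'_app)
  have inv1: "id_blinfun o\<^sub>L \<Phi>' x = id_blinfun" by (rule blinfun_eqI) (simp add: \<Phi>'x)
  obtain U' V \<psi> \<psi>' where UV: "open U'" "U' \<subseteq> U" "x \<in> U'" "open V" "\<Phi> x \<in> V"
      "homeomorphism U' V \<Phi> \<psi>"
      and d\<psi>: "\<And>y. y \<in> V \<Longrightarrow> (\<psi> has_derivative (\<psi>' y)) (at y)"
      and \<psi>': "\<And>y. y \<in> V \<Longrightarrow> \<psi>' y = inv (blinfun_apply (\<Phi>'(\<psi> y)))"
      and "\<And>y. y \<in> V \<Longrightarrow> bij (blinfun_apply (\<Phi>'(\<psi> y)))"
    by (rule inverse_function_theorem[of U \<Phi> \<Phi>' x id_blinfun, OF assms(1) d\<Phi> c\<Phi>' assms(2) inv1]; (assumption | (rule that; assumption)))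
  have Fx: "\<forall>i<m. F i x = 0" using MU assms(2,3) by blast
  have \<Phi>x: "\<Phi> x = 0" by (simp add: \<Phi>_def Fx)
  have hom: "\<And>y. y \<in> U' \<Longrightarrow> \<psi> (\<Phi> y) = y" "\<And>z. z \<in> V \<Longrightarrow> \<Phi> (\<psi> z) = z" "\<psi> ` V = U'"
    using UV(6) unfolding homeomorphism_def by auto
  have \<psi>0: "\<psi> 0 = x" using hom(1)[OF UV(3)] \<Phi>x by simp
  have V0: "0 \<in> V" using UV(5) \<Phi>x by simp
  have \<psi>'0: "\<psi>' 0 = id"
    using \<psi>'[OF V0] \<psi>0 \<Phi>'x by (simp add: id_def[symmetric] inv_id)
  have comp: "G j x \<bullet> \<Phi> y = F j y" if j: "j < m" for j y
  proof -
    have "G j x \<bullet> \<Phi> y = G j x \<bullet> (y - x) + (\<Sum>i<m. (F i y - G i x \<bullet> (y - x)) * (G j x \<bullet> u i))"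
      by (simp add: \<Phi>_def inner_add_right inner_sum_right)
    also have "\<dots> = G j x \<bullet> (y - x) + (\<Sum>i<m. if i = j then (F i y - G i x \<bullet> (y - x)) else 0)"
      using u j by (intro arg_cong2[where f="(+)"] refl sum.cong) auto
    also have "\<dots> = F j y" using j by simp
    finally show ?thesis .
  qed
  obtain r where r: "r > 0" "ball 0 r \<subseteq> V" using UV(4) V0 open_contains_ball by blast
  define e where "e = r / (norm w + 1)"
  have nw: "norm w + 1 > 0" by (smt (verit) norm_ge_zero)
  have e: "e > 0" using r(1) nw unfolding e_def by (rule divide_pos_pos)
  define \<gamma> where "\<gamma> t = \<psi> (t *\<^sub>R w)" for t
  have inM: "\<gamma> t \<in> M" if t: "\<bar>t\<bar> < e" for t
  proof -
    have "\<bar>t\<bar> * norm w \<le> \<bar>t\<bar> * (norm w + 1)" by (simp add: mult_left_mono)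
    also have "\<dots> < e * (norm w + 1)" using t nw by (intro mult_strict_right_mono) auto
    also have "\<dots> = r" using nw by (simp add: e_def)
    finally have "t *\<^sub>R w \<in> V" using r by auto
    then have 1: "\<gamma> t \<in> U" and 2: "\<Phi> (\<gamma> t) = t *\<^sub>R w"
      using hom UV(2) unfolding \<gamma>_def by auto
    have "F j (\<gamma> t) = 0" if j: "j < m" for j
      using comp[OF j, of "\<gamma> t"] 2 w j by simp
    then show ?thesis using MU 1 by blast
  qed
  have d\<psi>0: "(\<psi> has_derivative (\<lambda>a. a)) (at (0 *\<^sub>R w))"
    using d\<psi>[OF V0] \<psi>'0 by (simp add: id_def)
  have d1: "((\<lambda>t. t *\<^sub>R w) has_derivative (\<lambda>s. s *\<^sub>R w)) (at 0)"
    by (auto intro!: derivative_eq_intros)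
  have "(\<gamma> has_derivative (\<lambda>s. s *\<^sub>R w)) (at 0)"
    unfolding \<gamma>_def using has_derivative_compose[OF d1 d\<psi>0] by simp
  then have "(\<gamma> has_vector_derivative w) (at 0)"
    by (simp add: has_vector_derivative_def)
  moreover have "\<gamma> 0 = x" by (simp add: \<gamma>_def \<psi>0)
  ultimately show ?thesis unfolding tangent_space_def using e inM by blast
qed

lemma curve_ev:
  fixes \<gamma> :: "real \<Rightarrow> 'a::euclidean_space"
  assumes gd: "(\<gamma> has_vector_derivative w) (at 0)" and U: "open U" "\<gamma> 0 \<in> U" and e: "e > 0"
  shows "\<forall>\<^sub>F t in nhds 0. \<gamma> t \<in> U \<and> \<bar>t\<bar> < e"
proof -
  have "isCont \<gamma> 0"
    using gd by (metis differentiableI_vector differentiable_imp_continuous_within)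
  then have ev1: "\<forall>\<^sub>F t in nhds 0. \<gamma> t \<in> U"
    using U unfolding isCont_def tendsto_at_iff_tendsto_nhds
    by (metis topological_tendstoD)
  have ev2: "\<forall>\<^sub>F t in nhds 0. \<bar>t\<bar> < (e::real)"
    using eventually_nhds_in_open[of "{-e<..<e}" 0] e by (auto elim!: eventually_mono simp: abs_less_iff)
  show ?thesis using ev1 ev2 by (rule eventually_conj)
qed

lemma tangent_subspace:
  fixes M :: "'a::euclidean_space set"
  assumes "C1_submanifold M" "x \<in> M"
  shows "subspace (tangent_space M x)"
proof -
  obtain U m F G where UF: "open U" "x \<in> U"
      "\<forall>i<m. \<forall>y\<in>U. (F i has_derivative (\<lambda>h. G i y \<bullet> h)) (at y)"
      "\<forall>i<m. continuous_on U (G i)"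
      "M \<inter> U = {y\<in>U. \<forall>i<m. F i y = 0}"
      "\<forall>y\<in>M \<inter> U. \<forall>c :: nat \<Rightarrow> real. \<exists>h. \<forall>i<m. G i y \<bullet> h = c i"
    using assms(1)[unfolded C1_submanifold_def, rule_format, OF assms(2)] by blast
  have "tangent_space M x = {w. \<forall>i<m. G i x \<bullet> w = 0}"
  proof
    show "tangent_space M x \<subseteq> {w. \<forall>i<m. G i x \<bullet> w = 0}"
      using tangent_sub[OF UF(1,2,3,5)] by blast
    show "{w. \<forall>i<m. G i x \<bullet> w = 0} \<subseteq> tangent_space M x"
      using tangent_sup[OF UF(1,2) assms(2) UF(3,4,5)] UF(6) UF(2) assms(2) by blast
  qed
  moreover have "subspace {w. \<forall>i<m. G i x \<bullet> w = 0}"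
    unfolding subspace_def by (auto simp: inner_add_right)
  ultimately show ?thesis by simp
qed

lemma proj_char:
  fixes W :: "'a::euclidean_space set"
  assumes "subspace W" "u \<in> W" "v - u \<in> orthogonal_comp W"
  shows "proj W v = u"
  unfolding proj_def
proof (rule the_equality)
  show "u \<in> W \<and> v - u \<in> orthogonal_comp W" using assms by simp
  fix u' assume u': "u' \<in> W \<and> v - u' \<in> orthogonal_comp W"
  have "u - u' \<in> W" using assms u' by (simp add: subspace_diff)
  moreover have "u - u' \<in> orthogonal_comp W"
  proof -
    have "(v - u') - (v - u) \<in> orthogonal_comp W"
      using subspace_diff[OF subspace_orthogonal_comp, of "v - u'" W "v - u"] assms u' by blast
    moreover have "(v - u') - (v - u) = u - u'" by (simp add: algebra_simps)
    ultimately show ?thesis by simp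
  qed
  ultimately have "u - u' = 0" using orthogonal_Int_0[OF assms(1)] by blast
  then show "u' = u" by simp
qed

lemma proj_ex:
  fixes W :: "'a::euclidean_space set"
  assumes "subspace W"
  obtains u where "u \<in> W" "v - u \<in> orthogonal_comp W"
proof -
  obtain y z where yz: "y \<in> span W" "\<And>w. w \<in> span W \<Longrightarrow> orthogonal z w" "v = y + z"
    using orthogonal_subspace_decomp_exists[of W v] by blast
  have sW: "span W = W" using assms by (simp add: span_eq_iff)
  have "y \<in> W" using yz(1) sW by simp
  moreover have "v - y \<in> orthogonal_comp W"
    using yz sW unfolding orthogonal_comp_def by (auto simp: orthogonal_commute)
  ultimately show ?thesis by (rule that)
qed

lemma frechet_tangent:
  fixes f :: "'a::euclidean_space \<Rightarrow> ereal"
  assumes v: "v \<in> frechet_subdiff f x" and U: "open U" "x \<in> U" "x \<in> M"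
    and dh: "(h has_derivative (\<lambda>u. D \<bullet> u)) (at x)"
    and fh: "\<forall>z\<in>M \<inter> U. f z = ereal (h z)"
    and w: "w \<in> tangent_space M x"
  shows "(D - v) \<bullet> w \<ge> 0"
proof -
  obtain \<gamma> e where e: "e > 0" "\<gamma> 0 = x" "\<forall>t. \<bar>t\<bar> < e \<longrightarrow> \<gamma> t \<in> M"
     and gd: "(\<gamma> has_vector_derivative w) (at 0)"
    using w unfolding tangent_space_def by blast
  define a where "a = (D - v) \<bullet> w"
  define \<phi> where "\<phi> t = h (\<gamma> t) - v \<bullet> \<gamma> t" for t
  have gd': "(\<gamma> has_derivative (\<lambda>s. s *\<^sub>R w)) (at 0)"
    using gd by (simp add: has_vector_derivative_def)
  have dh': "(h has_derivative (\<lambda>u. D \<bullet> u)) (at (\<gamma> 0))" using dh e(2) by simp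
  have "(\<phi> has_derivative (\<lambda>s. D \<bullet> (s *\<^sub>R w) - v \<bullet> (s *\<^sub>R w))) (at 0)"
    unfolding \<phi>_def
    by (intro has_derivative_diff has_derivative_compose[OF gd' dh'] has_derivative_inner_right gd')
  moreover have "(\<lambda>s. D \<bullet> (s *\<^sub>R w) - v \<bullet> (s *\<^sub>R w)) = (*) a"
    by (rule ext) (simp add: a_def inner_diff_left algebra_simps)
  ultimately have d\<phi>: "DERIV \<phi> 0 :> a" by (simp add: has_field_derivative_def)
  have lim1: "((\<lambda>t. (\<phi> t - \<phi> 0) / t) \<longlongrightarrow> a) (at_right 0)"
    using DERIV_D[OF d\<phi>] by (simp add: filterlim_at_split)
  have lim2: "((\<lambda>t. norm ((\<gamma> t - \<gamma> 0) /\<^sub>R t)) \<longlongrightarrow> norm w) (at_right 0)"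
  proof -
    have "((\<lambda>y. ((\<gamma> y - \<gamma> 0) - (y - 0) *\<^sub>R w) /\<^sub>R norm (y - 0)) \<longlongrightarrow> 0) (at 0)"
      using gd' unfolding has_derivative_at_within by simp
    then have r: "((\<lambda>y. ((\<gamma> y - \<gamma> 0) - y *\<^sub>R w) /\<^sub>R norm y) \<longlongrightarrow> 0) (at_right 0)"
      by (simp add: filterlim_at_split)
    have "((\<lambda>y. ((\<gamma> y - \<gamma> 0) - y *\<^sub>R w) /\<^sub>R norm y + w) \<longlongrightarrow> 0 + w) (at_right 0)"
      by (intro tendsto_add r tendsto_const)
    then have "((\<lambda>y. ((\<gamma> y - \<gamma> 0) - y *\<^sub>R w) /\<^sub>R norm y + w) \<longlongrightarrow> w) (at_right 0)" by simp
    moreover have "\<forall>\<^sub>F y in at_right 0. ((\<gamma> y - \<gamma> 0) - y *\<^sub>R w) /\<^sub>R norm y + w = (\<gamma> y - \<gamma> 0) /\<^sub>R y"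
      unfolding eventually_at_filter
      by (rule always_eventually) (auto simp: algebra_simps)
    ultimately have "((\<lambda>y. (\<gamma> y - \<gamma> 0) /\<^sub>R y) \<longlongrightarrow> w) (at_right 0)"
      using Lim_transform_eventually by fastforce
    then show ?thesis by (rule tendsto_norm)
  qed
  have bound: "a \<ge> - \<epsilon> * norm w" if \<epsilon>: "\<epsilon> > 0" for \<epsilon>
  proof -
    obtain \<delta> where \<delta>: "\<delta> > 0" "\<forall>y. dist y x < \<delta> \<longrightarrow> f y \<ge> f x + ereal (v \<bullet> (y - x) - \<epsilon> * norm (y - x))"
      using v \<epsilon> unfolding frechet_subdiff_def by blast
    have op: "open (U \<inter> ball x \<delta>)" using U by auto
    have "\<forall>\<^sub>F t in nhds 0. \<gamma> t \<in> U \<inter> ball x \<delta> \<and> \<bar>t\<bar> < e"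
      by (rule curve_ev[OF gd op]) (use e \<delta> U in auto)
    then have ev: "\<forall>\<^sub>F t in at_right 0. - \<epsilon> * norm ((\<gamma> t - \<gamma> 0) /\<^sub>R t) \<le> (\<phi> t - \<phi> 0) / t"
      unfolding eventually_at_filter
    proof (rule eventually_mono)
      fix t :: real assume t: "\<gamma> t \<in> U \<inter> ball x \<delta> \<and> \<bar>t\<bar> < e"
      show "t \<noteq> 0 \<longrightarrow> t \<in> {0<..} \<longrightarrow> - \<epsilon> * norm ((\<gamma> t - \<gamma> 0) /\<^sub>R t) \<le> (\<phi> t - \<phi> 0) / t"
      proof (intro impI)
        assume "t \<in> {0<..}"
        then have tp: "t > 0" by simp
        have gM: "\<gamma> t \<in> M \<inter> U" using t e(3) by auto
        have "dist (\<gamma> t) x < \<delta>" using t by (auto simp: dist_commute)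
        then have "f (\<gamma> t) \<ge> f x + ereal (v \<bullet> (\<gamma> t - x) - \<epsilon> * norm (\<gamma> t - x))" using \<delta> by blast
        then have "h (\<gamma> t) \<ge> h x + (v \<bullet> (\<gamma> t - x) - \<epsilon> * norm (\<gamma> t - x))"
          using fh gM U by simp
        then have "\<phi> t - \<phi> 0 \<ge> - \<epsilon> * norm (\<gamma> t - x)"
          by (simp add: \<phi>_def e(2) inner_diff_right)
        then have "(\<phi> t - \<phi> 0) / t \<ge> (- \<epsilon> * norm (\<gamma> t - x)) / t"
          using divide_right_mono[OF _ less_imp_le[OF tp]] by blast
        moreover have "(- \<epsilon> * norm (\<gamma> t - x)) / t = - \<epsilon> * norm ((\<gamma> t - \<gamma> 0) /\<^sub>R t)"
          using tp e(2) by (simp add: divide_inverse_commute)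
        ultimately show "- \<epsilon> * norm ((\<gamma> t - \<gamma> 0) /\<^sub>R t) \<le> (\<phi> t - \<phi> 0) / t" by simp
      qed
    qed
    have lim3: "((\<lambda>t. - \<epsilon> * norm ((\<gamma> t - \<gamma> 0) /\<^sub>R t)) \<longlongrightarrow> - \<epsilon> * norm w) (at_right 0)"
      by (intro tendsto_mult tendsto_const lim2)
    show ?thesis
      by (rule tendsto_le[OF trivial_limit_at_right_real lim1 lim3 ev])
  qed
  show ?thesis
  proof (rule ccontr)
    assume "\<not> 0 \<le> (D - v) \<bullet> w"
    then have an: "a < 0" by (simp add: a_def)
    have nw: "norm w + 1 > 0" by (smt (verit) norm_ge_zero)
    define \<epsilon> where "\<epsilon> = - a / (norm w + 1)"
    have "\<epsilon> > 0" using an nw unfolding \<epsilon>_def by (intro divide_pos_pos) auto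
    then have "a \<ge> - \<epsilon> * norm w" by (rule bound)
    then have "a \<ge> (a * norm w) / (norm w + 1)" by (simp add: \<epsilon>_def)
    then have "a * (norm w + 1) \<ge> a * norm w" using nw by (simp add: pos_divide_le_eq)
    then show False using an by (simp add: algebra_simps)
  qed
qed

theorem proposition5:
  fixes f :: "'a::euclidean_space \<Rightarrow> ereal" and M :: "'a set" and xb :: 'a
  assumes "proper_fun f" and "closed_fun f"
    and "C1_submanifold M" and "xb \<in> M"
    and "\<exists>d>0. \<forall>z\<in>M. dist z xb < d \<longrightarrow> partly_smooth_at f z M"
    and "\<exists>d>0. \<forall>z\<in>M. dist z xb < d \<longrightarrow> (\<forall>v\<in>frechet_subdiff f z. prox_regular_at f z v)"
    and "gU f xb \<in> rel_interior (limiting_subdiff f xb)"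
  shows "\<exists>d>0. \<forall>x\<in>M. dist x xb < d \<longrightarrow> riem_grad M f x = gU f x"
proof -
  obtain d where d: "d > 0" "\<forall>z\<in>M. dist z xb < d \<longrightarrow> partly_smooth_at f z M"
    using assms(5) by blast
  have "\<forall>x\<in>M. dist x xb < d \<longrightarrow> riem_grad M f x = gU f x"
  proof (intro ballI impI)
    fix x assume xM: "x \<in> M" "dist x xb < d"
    then have PS: "partly_smooth_at f x M" using d by blast
    define T where "T = tangent_space M x"
    have sT: "subspace T" using tangent_subspace[OF assms(3) xM(1)] T_def by simp
    from PS obtain d' where d': "d' > 0" "\<forall>z\<in>M. dist z x < d' \<longrightarrow>
        frechet_subdiff f z = limiting_subdiff f z \<and> limiting_subdiff f z \<noteq> {}"
      unfolding partly_smooth_at_def by blast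
    then have reg: "frechet_subdiff f x = limiting_subdiff f x" "limiting_subdiff f x \<noteq> {}"
      using xM(1) by auto
    from PS obtain U h Dh where sm: "open U" "x \<in> U" "\<forall>y\<in>U. (h has_derivative (\<lambda>v. Dh y \<bullet> v)) (at y)"
        "\<forall>z\<in>M \<inter> U. f z = ereal (h z)"
      unfolding partly_smooth_at_def by blast
    from PS have sharp: "par (limiting_subdiff f x) = normal_space M x"
      unfolding partly_smooth_at_def by blast
    define S where "S = limiting_subdiff f x"
    define g0 where "g0 = (SOME g. g \<in> S)"
    have g0S: "g0 \<in> S" using reg(2) unfolding g0_def S_def by (simp add: some_in_eq)
    have V: "Vsp f x = par S"
      unfolding Vsp_def par_def S_def[symmetric] g0_def[symmetric] span_eq
    proof
      show "{y - g0 |y. y \<in> S} \<subseteq> span {a - b |a b. a \<in> S \<and> b \<in> S}"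
        using g0S by (auto intro!: span_base)
      show "{a - b |a b. a \<in> S \<and> b \<in> S} \<subseteq> span {y - g0 |y. y \<in> S}"
      proof
        fix z assume "z \<in> {a - b |a b. a \<in> S \<and> b \<in> S}"
        then obtain a b where ab: "a \<in> S" "b \<in> S" "z = a - b" by blast
        have "(a - g0) - (b - g0) \<in> span {y - g0 |y. y \<in> S}"
          using ab by (intro span_diff span_base) auto
        then show "z \<in> span {y - g0 |y. y \<in> S}" using ab by simp
      qed
    qed
    have Us: "Usp f x = T"
      unfolding Usp_def V using sharp orthogonal_comp_self[OF sT]
      by (simp add: S_def normal_space_def T_def)
    have gUx: "gU f x = proj T g0"
      unfolding gU_def Us S_def[symmetric] g0_def[symmetric] ..
    have dh: "(h has_derivative (\<lambda>u. Dh x \<bullet> u)) (at x)" using sm by blast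
    have g0F: "g0 \<in> frechet_subdiff f x" using g0S reg(1) S_def by simp
    have orth: "(Dh x - g0) \<bullet> w = 0" if w: "w \<in> T" for w
    proof -
      have 1: "(Dh x - g0) \<bullet> w \<ge> 0"
        using frechet_tangent[OF g0F sm(1,2) xM(1) dh sm(4)] w T_def by blast
      have "- w \<in> T" using sT w by (simp add: subspace_neg)
      then have 2: "(Dh x - g0) \<bullet> (- w) \<ge> 0"
        using frechet_tangent[OF g0F sm(1,2) xM(1) dh sm(4)] T_def by blast
      show ?thesis using 1 2 by simp
    qed
    obtain p where p: "p \<in> T" "Dh x - p \<in> orthogonal_comp T" using proj_ex[OF sT] by blast
    have pw: "Dh x \<bullet> w = p \<bullet> w" if w: "w \<in> T" for w
    proof -
      have "w \<bullet> (Dh x - p) = 0" using p(2) w unfolding orthogonal_comp_def orthogonal_def by blast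
      then show ?thesis by (simp add: inner_diff_right inner_commute)
    qed
    have projp: "proj T g0 = p"
    proof (rule proj_char[OF sT p(1)])
      show "g0 - p \<in> orthogonal_comp T"
        unfolding orthogonal_comp_def orthogonal_def
      proof (intro CollectI ballI)
        fix y assume y: "y \<in> T"
        have "y \<bullet> (g0 - p) = (Dh x - p) \<bullet> y - (Dh x - g0) \<bullet> y"
          by (simp add: inner_diff_left inner_diff_right inner_commute)
        also have "\<dots> = 0" using orth[OF y] pw[OF y] by (simp add: inner_diff_left)
        finally show "y \<bullet> (g0 - p) = 0" .
      qed
    qed
    have isp: "is_riem_grad M f x p"
      unfolding is_riem_grad_def
    proof (intro conjI allI impI)
      show "p \<in> tangent_space M x" using p(1) T_def by simp
      fix \<gamma> e w
      assume e: "(e::real) > 0" "\<gamma> 0 = x" "\<forall>t. \<bar>t\<bar> < e \<longrightarrow> \<gamma> t \<in> M"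
        and gd: "(\<gamma> has_vector_derivative w) (at 0)"
      have wT: "w \<in> T" unfolding T_def tangent_space_def using e gd by blast
      have ev: "\<forall>\<^sub>F t in nhds 0. \<gamma> t \<in> U \<and> \<bar>t\<bar> < e"
        by (rule curve_ev[OF gd sm(1)]) (use e sm in auto)
      have ev2: "\<forall>\<^sub>F t in nhds 0. real_of_ereal (f (\<gamma> t)) = h (\<gamma> t)"
        using ev by eventually_elim (use e sm(4) in auto)
      have gd': "(\<gamma> has_derivative (\<lambda>s. s *\<^sub>R w)) (at 0)"
        using gd by (simp add: has_vector_derivative_def)
      have dh': "(h has_derivative (\<lambda>u. Dh x \<bullet> u)) (at (\<gamma> 0))" using dh e(2) by simp
      have "((\<lambda>t. h (\<gamma> t)) has_derivative (\<lambda>s. Dh x \<bullet> (s *\<^sub>R w))) (at 0)"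
        using has_derivative_compose[OF gd' dh'] .
      then have "DERIV (\<lambda>t. h (\<gamma> t)) 0 :> Dh x \<bullet> w"
        unfolding has_field_derivative_def by (simp add: mult.commute[of _ "Dh x \<bullet> w"])
      then have "DERIV (\<lambda>t. h (\<gamma> t)) 0 :> p \<bullet> w" using pw[OF wT] by simp
      then show "((\<lambda>t. real_of_ereal (f (\<gamma> t))) has_real_derivative p \<bullet> w) (at 0)"
        using DERIV_cong_ev[OF refl ev2 refl] by simp
    qed
    have uniq: "q = p" if q: "is_riem_grad M f x q" for q
    proof -
      have qT: "q \<in> T" using q unfolding is_riem_grad_def T_def by blast
      have rT: "q - p \<in> T" using qT p(1) sT by (simp add: subspace_diff)
      then obtain \<gamma> e where e: "e > 0" "\<gamma> 0 = x" "\<forall>t. \<bar>t\<bar> < e \<longrightarrow> \<gamma> t \<in> M"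
          and gd: "(\<gamma> has_vector_derivative (q - p)) (at 0)"
        unfolding T_def tangent_space_def by blast
      have D1: "((\<lambda>t. real_of_ereal (f (\<gamma> t))) has_real_derivative q \<bullet> (q - p)) (at 0)"
        using q e gd unfolding is_riem_grad_def by blast
      have D2: "((\<lambda>t. real_of_ereal (f (\<gamma> t))) has_real_derivative p \<bullet> (q - p)) (at 0)"
        using isp e gd unfolding is_riem_grad_def by blast
      have "q \<bullet> (q - p) = p \<bullet> (q - p)" using DERIV_unique[OF D1 D2] .
      then have "(q - p) \<bullet> (q - p) = 0" by (simp add: inner_diff_left)
      then show ?thesis by simp
    qed
    have "riem_grad M f x = p"
      unfolding riem_grad_def using isp uniq by (rule the_equality)
    then show "riem_grad M f x = gU f x" using gUx projp by simp
  qed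
  with d(1) show ?thesis by blast
qed

end
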